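(* In the session calculus, weak fairness of components coincides with justness: a path (starting in a network state) is WC-fair if and only if it is just.
   Context: Session calculus. Fix sets of locations $p,q,r,\dots$, labels $\lambda$ and recursion variables $X,Y$. Threads: $P ::= \mathbf{end} \mid \bigoplus_{i\in I} p_i!\lambda_i;P_i \mid \sum_{i\in I} p_i?\lambda_i;P_i \mid X \mid \mu X.P$, with $I$ finite (nonempty for $\bigoplus$) and expressions $\mu X.X$, $\mu X.\mu Y.P$ excluded. Networks: $N ::= p[\![P]\!] \mid 0 \mid N\parallel N$; in a network all locations are distinct, all threads are closed, and every location named in a send or receive is a location of $N$. Thread states additionally allow the form $\langle q!\lambda\rangle;P$ (an output already selected); network states are built from located thread states likewise, taken modulo the structural congruence $\equiv$ (associativity, commutativity of $\parallel$, $N\parallel 0\equiv N$). The transition relation is the least relation closed under $\equiv$ containing: (choice) $p[\![\bigoplus_{i\in I}p_i!\lambda_i;P_i]\!]\parallel N \xrightarrow{\tau} p[\![\langle p_k!\lambda_k\rangle;P_k]\!]\parallel N$ for $k\in I$; (unfold) $p[\![\mu X.P]\!]\parallel N\xrightarrow{\tau} p[\![P\{\mu X.P/X\}]\!]\parallel N$; (comm) $p_k[\![\langle q!\lambda_k\rangle;Q]\!]\parallel q[\![\sum_{i\in I}p_i?\lambda_i;P_i]\!]\parallel N \xrightarrow{(p_k,\lambda_k,q)} p_k[\![Q]\!]\parallel q[\![P_k]\!]\parallel N$ for $k\in I$. For a transition $t$, $\mathrm{comp}(t)$ is the single location moving in a $\tau$-transition and $\{p,q\}$ for a label $(p,\lambda,q)$;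 $t$ involves $p$ if $p\in\mathrm{comp}(t)$; $t,u$ are concurrent if $\mathrm{comp}(t)\cap\mathrm{comp}(u)=\emptyset$. A path is a network state with a maximal (infinite or ending in a state without outgoing transitions) sequence of transitions. WC: location $p$ is enabled in a state if some transition from it involves $p$; perpetually enabled on a path if enabled in all its states. A path $\pi$ is WC-fair if for every suffix $\pi'$ and every location perpetually enabled on $\pi'$, $\pi'$ contains a transition involving that location. Justness: $\pi$ is just if for every suffix of $\pi$ starting in state $s$ and every transition $t$ enabled in $s$, that suffix contains a transition $u$ not concurrent with $t$. *)

theory Defs
  imports Main "HOL-Library.Extended_Nat"
begin

text \<open>Locations 'l, labels 'a, recursion variables 'x.
  Finite index sets I of choices are represented by lists of branches.
  The constructor Sel q lam P represents the thread state <q!lam>;P.\<close>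

datatype ('l, 'a, 'x) proc =
    End
  | Send "('l \<times> 'a \<times> ('l, 'a, 'x) proc) list"
  | Recv "('l \<times> 'a \<times> ('l, 'a, 'x) proc) list"
  | Var 'x
  | Mu 'x "('l, 'a, 'x) proc"
  | Sel 'l 'a "('l, 'a, 'x) proc"

fun is_thread :: "('l, 'a, 'x) proc \<Rightarrow> bool" where
  "is_thread End = True"
| "is_thread (Send bs) = (bs \<noteq> [] \<and> (\<forall>b\<in>set bs. is_thread (snd (snd b))))"
| "is_thread (Recv bs) = (\<forall>b\<in>set bs. is_thread (snd (snd b)))"
| "is_thread (Var x) = True"
| "is_thread (Mu x P) = (P \<noteq> Var x \<and> (\<forall>y Q. P \<noteq> Mu y Q) \<and> is_thread P)"
| "is_thread (Sel q l P) = False"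

fun fv :: "('l, 'a, 'x) proc \<Rightarrow> 'x set" where
  "fv End = {}"
| "fv (Send bs) = (\<Union>b\<in>set bs. fv (snd (snd b)))"
| "fv (Recv bs) = (\<Union>b\<in>set bs. fv (snd (snd b)))"
| "fv (Var x) = {x}"
| "fv (Mu x P) = fv P - {x}"
| "fv (Sel q l P) = fv P"

fun locs :: "('l, 'a, 'x) proc \<Rightarrow> 'l set" where
  "locs End = {}"
| "locs (Send bs) = (\<Union>b\<in>set bs. insert (fst b) (locs (snd (snd b))))"
| "locs (Recv bs) = (\<Union>b\<in>set bs. insert (fst b) (locs (snd (snd b))))"
| "locs (Var x) = {}"
| "locs (Mu x P) = locs P"
| "locs (Sel q l P) = insert q (locs P)"

text \<open>Substitution P{Q/X} (used only with closed Q, so no capture).\<close>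
fun subst :: "'x \<Rightarrow> ('l, 'a, 'x) proc \<Rightarrow> ('l, 'a, 'x) proc \<Rightarrow> ('l, 'a, 'x) proc" where
  "subst x Q End = End"
| "subst x Q (Send bs) = Send (map (\<lambda>(p, l, P). (p, l, subst x Q P)) bs)"
| "subst x Q (Recv bs) = Recv (map (\<lambda>(p, l, P). (p, l, subst x Q P)) bs)"
| "subst x Q (Var y) = (if x = y then Q else Var y)"
| "subst x Q (Mu y P) = (if x = y then Mu y P else Mu y (subst x Q P))"
| "subst x Q (Sel q l P) = Sel q l (subst x Q P)"

definition is_thread_state :: "('l, 'a, 'x) proc \<Rightarrow> bool" where
  "is_thread_state P \<longleftrightarrow> is_thread P \<or> (\<exists>q l P'. P = Sel q l P' \<and> is_thread P')"

text \<open>A network state modulo structural congruence is a finite partial map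
  from locations to thread states (locations are distinct, order and 0 irrelevant).\<close>
type_synonym ('l, 'a, 'x) net = "'l \<Rightarrow> ('l, 'a, 'x) proc option"

definition net_state :: "('l, 'a, 'x) net \<Rightarrow> bool" where
  "net_state N \<longleftrightarrow> finite (dom N) \<and>
     (\<forall>p P. N p = Some P \<longrightarrow> is_thread_state P \<and> fv P = {} \<and> locs P \<subseteq> dom N)"

text \<open>Transition labels; a tau-transition is annotated with the unique moving location.\<close>
datatype ('l, 'a) act = Tau 'l | Comm 'l 'a 'l

fun comp :: "('l, 'a) act \<Rightarrow> 'l set" where
  "comp (Tau p) = {p}"
| "comp (Comm p l q) = {p, q}"

inductive step :: "('l, 'a, 'x) net \<Rightarrow> ('l, 'a) act \<Rightarrow> ('l, 'a, 'x) net \<Rightarrow> bool" where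
  choice: "\<lbrakk> N p = Some (Send bs); k < length bs; bs ! k = (q, l, P) \<rbrakk>
           \<Longrightarrow> step N (Tau p) (N(p \<mapsto> Sel q l P))"
| unfold: "N p = Some (Mu x P) \<Longrightarrow> step N (Tau p) (N(p \<mapsto> subst x (Mu x P) P))"
| comm: "\<lbrakk> p \<noteq> q; N p = Some (Sel q l Q); N q = Some (Recv bs); k < length bs;
           bs ! k = (p, l, P) \<rbrakk>
         \<Longrightarrow> step N (Comm p l q) (N(p \<mapsto> Q, q \<mapsto> P))"

text \<open>A path from N: states sigma 0, sigma 1, ..., actions alpha 0, alpha 1, ...,
  with n the number of transitions (infinity for an infinite path). Values beyond n are irrelevant.\<close>
definition is_path :: "('l, 'a, 'x) net \<Rightarrow> (nat \<Rightarrow> ('l, 'a, 'x) net) \<Rightarrow> (nat \<Rightarrow> ('l, 'a) act) \<Rightarrow> enat \<Rightarrow> bool" where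
  "is_path N \<sigma> \<alpha> n \<longleftrightarrow> \<sigma> 0 = N
     \<and> (\<forall>i. enat i < n \<longrightarrow> step (\<sigma> i) (\<alpha> i) (\<sigma> (Suc i)))
     \<and> (\<forall>m. n = enat m \<longrightarrow> \<not> (\<exists>a N'. step (\<sigma> m) a N'))"

definition enabled :: "('l, 'a, 'x) net \<Rightarrow> 'l \<Rightarrow> bool" where
  "enabled N p \<longleftrightarrow> (\<exists>a N'. step N a N' \<and> p \<in> comp a)"

text \<open>Suffixes start at index k with enat k \<le> n; the suffix's states are sigma j for
  k \<le> j, enat j \<le> n, and its transitions are those with index k \<le> j, enat j < n.\<close>
definition wc_fair :: "(nat \<Rightarrow> ('l, 'a, 'x) net) \<Rightarrow> (nat \<Rightarrow> ('l, 'a) act) \<Rightarrow> enat \<Rightarrow> bool" where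
  "wc_fair \<sigma> \<alpha> n \<longleftrightarrow> (\<forall>k p. enat k \<le> n \<longrightarrow>
      (\<forall>j. k \<le> j \<longrightarrow> enat j \<le> n \<longrightarrow> enabled (\<sigma> j) p) \<longrightarrow>
      (\<exists>j. k \<le> j \<and> enat j < n \<and> p \<in> comp (\<alpha> j)))"

definition just :: "(nat \<Rightarrow> ('l, 'a, 'x) net) \<Rightarrow> (nat \<Rightarrow> ('l, 'a) act) \<Rightarrow> enat \<Rightarrow> bool" where
  "just \<sigma> \<alpha> n \<longleftrightarrow> (\<forall>k. enat k \<le> n \<longrightarrow> (\<forall>t N'. step (\<sigma> k) t N' \<longrightarrow>
      (\<exists>j. k \<le> j \<and> enat j < n \<and> comp (\<alpha> j) \<inter> comp t \<noteq> {})))"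

end

theory Submission
  imports Defs
begin

lemma size_branch: "(r,l,P) \<in> set bs \<Longrightarrow> size P < size (Recv bs)"
  by (induct bs) auto

lemma frame: "step N a N' \<Longrightarrow> p \<notin> comp a \<Longrightarrow> N' p = N p"
  by (induct rule: step.induct) auto

lemma comp_ne: "\<exists>p. p \<in> comp a"
  by (cases a) auto

lemma step_local: "step N t N' \<Longrightarrow> (\<forall>x\<in>comp t. M x = N x) \<Longrightarrow> \<exists>M'. step M t M'"
proof (induct rule: step.induct)
  case (choice N p bs k q l P)
  then show ?case by (auto intro: step.choice)
next
  case (unfold N p x P)
  then show ?case by (auto intro: step.unfold)
next
  case (comm p q N l Q bs k P)
  then show ?case by (auto intro: step.comm)
qed

lemma sel_step: "step N a N' \<Longrightarrow> r \<in> comp a \<Longrightarrow> N r = Some (Sel p l Q) \<Longrightarrow> p \<in> comp a"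
  by (induct rule: step.induct) auto

lemma classify: "step N a N' \<Longrightarrow> p \<in> comp a \<Longrightarrow>
   comp a = {p} \<or> (\<exists>r l Q. comp a = {r, p} \<and> N r = Some (Sel p l Q))
   \<or> (\<exists>q l Q bs. comp a = {p, q} \<and> N p = Some (Sel q l Q) \<and> N q = Some (Recv bs))"
  by (induct rule: step.induct) auto

lemma sel_enabled: "step N a N' \<Longrightarrow> p \<in> comp a \<Longrightarrow> N p = Some (Sel q l Q) \<Longrightarrow>
   comp a = {p, q} \<and> (\<exists>bs. N q = Some (Recv bs))"
  by (induct rule: step.induct) auto

lemma recv_step: "step N a N' \<Longrightarrow> q \<in> comp a \<Longrightarrow> N q = Some (Recv bs) \<Longrightarrow>
   \<exists>P. N' q = Some P \<and> size P < size (Recv bs)"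
proof (induct rule: step.induct)
  case (comm p q' N l Q bs' k P)
  then show ?case using size_branch[of p l P bs'] nth_mem[of k bs'] by auto
qed auto

lemma frame_path:
  assumes steps: "\<forall>i. enat i < n \<longrightarrow> step (\<sigma> i) (\<alpha> i) (\<sigma> (Suc i))"
  shows "k \<le> j \<Longrightarrow> enat j \<le> n \<Longrightarrow> (\<forall>i. k \<le> i \<and> i < j \<longrightarrow> p \<notin> comp (\<alpha> i)) \<Longrightarrow> \<sigma> j p = \<sigma> k p"
proof (induct j)
  case 0 then show ?case by simp
next
  case (Suc j)
  show ?case
  proof (cases "k = Suc j")
    case True then show ?thesis by simp
  next
    case False
    then have kj: "k \<le> j" using Suc by simp
    have lt: "enat j < n" using Suc(3) by (metis Suc_ile_eq)
    have lej: "enat j \<le> n" using lt by (rule order.strict_implies_order)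
    have "\<sigma> j p = \<sigma> k p" using Suc(1)[OF kj lej] Suc(4) by simp
    moreover have "\<sigma> (Suc j) p = \<sigma> j p"
      using frame[OF steps[rule_format, OF lt]] Suc(4) kj by auto
    ultimately show ?thesis by simp
  qed
qed

lemma fair_just:
  assumes steps: "\<forall>i. enat i < n \<longrightarrow> step (\<sigma> i) (\<alpha> i) (\<sigma> (Suc i))"
    and fair: "wc_fair \<sigma> \<alpha> n"
  shows "just \<sigma> \<alpha> n"
  unfolding just_def
proof (intro allI impI, rule ccontr)
  fix k t N'
  assume kn: "enat k \<le> n" and st: "step (\<sigma> k) t N'"
    and no: "\<not> (\<exists>j\<ge>k. enat j < n \<and> comp (\<alpha> j) \<inter> comp t \<noteq> {})"
  have no': "\<And>j. k \<le> j \<Longrightarrow> enat j < n \<Longrightarrow> comp (\<alpha> j) \<inter> comp t = {}"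
    using no by blast
  obtain p where p: "p \<in> comp t" using comp_ne[of t] by iprover
  have "\<forall>j. k \<le> j \<longrightarrow> enat j \<le> n \<longrightarrow> enabled (\<sigma> j) p"
  proof (intro allI impI)
    fix j assume j: "k \<le> j" "enat j \<le> n"
    have "\<forall>x\<in>comp t. \<sigma> j x = \<sigma> k x"
    proof
      fix x assume x: "x \<in> comp t"
      have "\<forall>i. k \<le> i \<and> i < j \<longrightarrow> x \<notin> comp (\<alpha> i)"
      proof (intro allI impI)
        fix i assume i: "k \<le> i \<and> i < j"
        then have "enat i < enat j" by simp
        then have "enat i < n" using j(2) by (rule less_le_trans)
        then have "comp (\<alpha> i) \<inter> comp t = {}" using i by (intro no') auto
        then show "x \<notin> comp (\<alpha> i)" using x by auto
      qed
      then show "\<sigma> j x = \<sigma> k x" by (rule frame_path[OF steps j])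
    qed
    then obtain M' where "step (\<sigma> j) t M'" using step_local[OF st] by iprover
    then show "enabled (\<sigma> j) p" using p unfolding enabled_def by iprover
  qed
  then obtain j where "k \<le> j" "enat j < n" "p \<in> comp (\<alpha> j)"
    using fair[unfolded wc_fair_def, rule_format, OF kn] by blast
  then show False using no' p by auto
qed


lemma just_fair:
  assumes steps: "\<forall>i. enat i < n \<longrightarrow> step (\<sigma> i) (\<alpha> i) (\<sigma> (Suc i))"
    and jst: "just \<sigma> \<alpha> n"
  shows "wc_fair \<sigma> \<alpha> n"
  unfolding wc_fair_def
proof (intro allI impI, rule ccontr)
  fix k p
  assume kn: "enat k \<le> n"
    and en: "\<forall>j. k \<le> j \<longrightarrow> enat j \<le> n \<longrightarrow> enabled (\<sigma> j) p"
    and no: "\<not> (\<exists>j\<ge>k. enat j < n \<and> p \<in> comp (\<alpha> j))"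
  have J: "\<And>j t N'. enat j \<le> n \<Longrightarrow> step (\<sigma> j) t N' \<Longrightarrow> \<exists>j'\<ge>j. enat j' < n \<and> comp (\<alpha> j') \<inter> comp t \<noteq> {}"
    using jst unfolding just_def by blast
  have same: "\<And>j. k \<le> j \<Longrightarrow> enat j \<le> n \<Longrightarrow> \<sigma> j p = \<sigma> k p"
  proof -
    fix j assume j: "k \<le> j" "enat j \<le> n"
    have "\<forall>i. k \<le> i \<and> i < j \<longrightarrow> p \<notin> comp (\<alpha> i)"
    proof (intro allI impI)
      fix i assume i: "k \<le> i \<and> i < j"
      then have "enat i < enat j" by simp
        then have "enat i < n" using j(2) by (rule less_le_trans)
      then show "p \<notin> comp (\<alpha> i)" using no i by blast
    qed
    then show "\<sigma> j p = \<sigma> k p" by (rule frame_path[OF steps j])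
  qed
  obtain a N' where st: "step (\<sigma> k) a N'" and pa: "p \<in> comp a"
    using en kn unfolding enabled_def by blast
  from classify[OF st pa] show False
  proof (elim disjE exE conjE)
    assume "comp a = {p}"
    then show False using J[OF kn st] no by auto
  next
    fix r l Q assume ca: "comp a = {r, p}" and r: "\<sigma> k r = Some (Sel p l Q)"
    obtain j where j: "j \<ge> k" "enat j < n" "r \<in> comp (\<alpha> j)"
      using J[OF kn st] no ca by auto
    define j0 where "j0 = (LEAST j. k \<le> j \<and> enat j < n \<and> r \<in> comp (\<alpha> j))"
    have j0: "k \<le> j0 \<and> enat j0 < n \<and> r \<in> comp (\<alpha> j0)"
      unfolding j0_def by (rule LeastI[of _ j]) (use j in auto)
    have min: "\<forall>i. k \<le> i \<and> i < j0 \<longrightarrow> r \<notin> comp (\<alpha> i)"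
    proof (intro allI impI)
      fix i assume i: "k \<le> i \<and> i < j0"
      show "r \<notin> comp (\<alpha> i)"
      proof
        assume "r \<in> comp (\<alpha> i)"
        moreover have "enat i < enat j0" using i by simp
        then have "enat i < n" using j0 by (blast intro: less_trans)
        ultimately have "j0 \<le> i" unfolding j0_def using i by (intro Least_le) auto
        then show False using i by simp
      qed
    qed
    have "\<sigma> j0 r = \<sigma> k r"
      using frame_path[OF steps _ _ min] j0 by (simp add: order_less_imp_le)
    then have "p \<in> comp (\<alpha> j0)"
      using sel_step[OF steps[rule_format, of j0]] j0 r by auto
    then show False using no j0 by blast
  next
    fix q l Q bs assume pk: "\<sigma> k p = Some (Sel q l Q)"
    have recv: "\<And>j. k \<le> j \<Longrightarrow> enat j \<le> n \<Longrightarrow> (\<exists>bs. \<sigma> j q = Some (Recv bs)) \<and>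
                  (\<exists>j'\<ge>j. enat j' < n \<and> q \<in> comp (\<alpha> j'))"
    proof -
      fix j assume j: "k \<le> j" "enat j \<le> n"
      obtain b M where sb: "step (\<sigma> j) b M" and pb: "p \<in> comp b"
        using en j unfolding enabled_def by blast
      have pj: "\<sigma> j p = Some (Sel q l Q)" using same[OF j] pk by simp
      from sel_enabled[OF sb pb pj] have cb: "comp b = {p, q}" and "\<exists>bs. \<sigma> j q = Some (Recv bs)"
        by auto
      moreover obtain j' where "j' \<ge> j" "enat j' < n" "comp (\<alpha> j') \<inter> comp b \<noteq> {}"
        using J[OF j(2) sb] by blast
      moreover have "p \<notin> comp (\<alpha> j')" using no \<open>j' \<ge> j\<close> j(1) \<open>enat j' < n\<close> by auto
      ultimately show "(\<exists>bs. \<sigma> j q = Some (Recv bs)) \<and> (\<exists>j'\<ge>j. enat j' < n \<and> q \<in> comp (\<alpha> j'))"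
        using cb by auto
    qed
    define f where "f j = size (the (\<sigma> j q))" for j
    have dec: "\<And>i. k \<le> i \<Longrightarrow> enat i < n \<Longrightarrow> f (Suc i) \<le> f i \<and> (q \<in> comp (\<alpha> i) \<longrightarrow> f (Suc i) < f i)"
    proof -
      fix i assume i: "k \<le> i" "enat i < n"
      have st': "step (\<sigma> i) (\<alpha> i) (\<sigma> (Suc i))" using steps i by blast
      obtain bs' where b: "\<sigma> i q = Some (Recv bs')" using recv[OF i(1)] i(2) by (meson order_less_imp_le)
      show "f (Suc i) \<le> f i \<and> (q \<in> comp (\<alpha> i) \<longrightarrow> f (Suc i) < f i)"
      proof (cases "q \<in> comp (\<alpha> i)")
        case True
        then show ?thesis using recv_step[OF st' True b] b unfolding f_def by auto
      next
        case False
        then show ?thesis using frame[OF st' False] unfolding f_def by auto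
      qed
    qed
    have mono: "\<And>j d. k \<le> j \<Longrightarrow> enat (j + d) \<le> n \<Longrightarrow> f (j + d) \<le> f j"
    proof -
      fix j d show "k \<le> j \<Longrightarrow> enat (j + d) \<le> n \<Longrightarrow> f (j + d) \<le> f j"
      proof (induct d)
        case 0 then show ?case by simp
      next
        case (Suc d)
        have "enat (j + d) < n" using Suc(3) by (simp add: Suc_ile_eq)
        then show ?case using Suc dec[of "j + d"] by (auto simp: order_less_imp_le)
      qed
    qed
    have "\<forall>j. k \<le> j \<longrightarrow> enat j \<le> n \<longrightarrow> f j \<le> m \<longrightarrow> False" for m
    proof (induct m rule: less_induct)
      case (less m)
      show ?case
      proof (intro allI impI)
        fix j assume j: "k \<le> j" "enat j \<le> n" "f j \<le> m"
        obtain j' where j': "j' \<ge> j" "enat j' < n" "q \<in> comp (\<alpha> j')"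
          using recv[OF j(1,2)] by blast
        have "f j' \<le> f j" using mono[of j "j' - j"] j j' by (simp add: order_less_imp_le)
        moreover have "f (Suc j') < f j'" using dec[of j'] j j' by auto
        moreover have "enat (Suc j') \<le> n" using j'(2) by (simp add: Suc_ile_eq)
        moreover have "f (Suc j') < m" using calculation j(3) by linarith
        ultimately show False using less[of "f (Suc j')"] j j' by (meson le_Suc_eq order_refl order_trans)
      qed
    qed
    then show False using kn by blast
  qed
qed

theorem mainTheorem5:
  fixes N :: "('l, 'a, 'x) net"
    and \<sigma> :: "nat \<Rightarrow> ('l, 'a, 'x) net" and \<alpha> :: "nat \<Rightarrow> ('l, 'a) act" and n :: enat
  assumes "net_state N"
    and "is_path N \<sigma> \<alpha> n"
  shows "wc_fair \<sigma> \<alpha> n \<longleftrightarrow> just \<sigma> \<alpha> n"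
proof -
  have steps: "\<forall>i. enat i < n \<longrightarrow> step (\<sigma> i) (\<alpha> i) (\<sigma> (Suc i))"
    using assms(2) unfolding is_path_def by blast
  show ?thesis using fair_just[OF steps] just_fair[OF steps] by blast
qed

end
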